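(* A bipartite graph $G$ satisfies $\mathrm{diss}(G)=\alpha(G)$ if and only if there is no induced matching $N$ in $G$ such that every maximum matching of $G$ contains at least one edge of $N$.
   Context: All graphs are finite, simple and undirected. A set $I$ of vertices of a graph $G$ is a dissociation set if the induced subgraph $G[I]$ has maximum degree at most $1$; $\mathrm{diss}(G)$ is the maximum order of a dissociation set in $G$. $\alpha(G)$ is the independence number. An induced matching is a matching $N$ such that the subgraph of $G$ induced by the vertices covered by $N$ has edge set exactly $N$. *)

theory Defs
  imports Main
begin

definition simple_graph :: "'a set \<Rightarrow> 'a set set \<Rightarrow> bool" where
  "simple_graph V E \<longleftrightarrow> finite V \<and> (\<forall>e\<in>E. e \<subseteq> V \<and> card e = 2)"

definition bipartite :: "'a set \<Rightarrow> 'a set set \<Rightarrow> bool" where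
  "bipartite V E \<longleftrightarrow> (\<exists>A B. A \<union> B = V \<and> A \<inter> B = {} \<and>
     (\<forall>e\<in>E. e \<inter> A \<noteq> {} \<and> e \<inter> B \<noteq> {}))"

definition independent_set :: "'a set \<Rightarrow> 'a set set \<Rightarrow> 'a set \<Rightarrow> bool" where
  "independent_set V E I \<longleftrightarrow> I \<subseteq> V \<and> (\<forall>u\<in>I. \<forall>v\<in>I. {u, v} \<notin> E)"

definition dissociation_set :: "'a set \<Rightarrow> 'a set set \<Rightarrow> 'a set \<Rightarrow> bool" where
  "dissociation_set V E I \<longleftrightarrow> I \<subseteq> V \<and> (\<forall>v\<in>I. card {u\<in>I. {u, v} \<in> E} \<le> 1)"

definition independence_number :: "'a set \<Rightarrow> 'a set set \<Rightarrow> nat" where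
  "independence_number V E = Max (card ` {I. independent_set V E I})"

definition diss :: "'a set \<Rightarrow> 'a set set \<Rightarrow> nat" where
  "diss V E = Max (card ` {I. dissociation_set V E I})"

definition matching :: "'a set set \<Rightarrow> 'a set set \<Rightarrow> bool" where
  "matching E M \<longleftrightarrow> M \<subseteq> E \<and> (\<forall>e\<in>M. \<forall>f\<in>M. e \<noteq> f \<longrightarrow> e \<inter> f = {})"

definition maximum_matching :: "'a set set \<Rightarrow> 'a set set \<Rightarrow> bool" where
  "maximum_matching E M \<longleftrightarrow> matching E M \<and> (\<forall>M'. matching E M' \<longrightarrow> card M' \<le> card M)"

definition induced_matching :: "'a set set \<Rightarrow> 'a set set \<Rightarrow> bool" where
  "induced_matching E N \<longleftrightarrow> matching E N \<and> {e\<in>E. e \<subseteq> \<Union>N} = N"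

end

theory Submission
  imports Defs
begin

lemma hall:
  assumes "finite A" "\<And>a. a\<in>A \<Longrightarrow> finite (N a)"
    "\<And>S. S \<subseteq> A \<Longrightarrow> card S \<le> card (\<Union>(N ` S))"
  shows "\<exists>f. inj_on f A \<and> (\<forall>a\<in>A. f a \<in> N a)"
  using assms
proof (induction "card A" arbitrary: A N rule: less_induct)
  case less
  show ?case
  proof (cases "A = {}")
    case True then show ?thesis by auto
  next
    case False
    show ?thesis
    proof (cases "\<exists>S. S \<noteq> {} \<and> S \<subset> A \<and> card (\<Union>(N ` S)) \<le> card S")
      case True
      then obtain S where S: "S \<noteq> {}" "S \<subset> A" "card (\<Union>(N ` S)) \<le> card S" by auto
      have cS: "card (\<Union>(N`S)) = card S" using less.prems(3)[of S] S by force
      have finS: "finite S" using S less.prems(1) finite_subset by blast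
      have "card S < card A" using S less.prems(1) psubset_card_mono by auto
      then obtain f1 where f1: "inj_on f1 S" "\<forall>a\<in>S. f1 a \<in> N a"
        using less.hyps[of S N] finS less.prems S by blast
      define U where "U = \<Union>(N`S)"
      have finU: "finite U" unfolding U_def using finS less.prems(2) S by blast
      define N2 where "N2 a = N a - U" for a
      have "card (A - S) < card A" using S less.prems(1)
        by (metis Diff_subset card_Diff_subset card_gt_0_iff diff_less finS psubset_imp_subset
            card_mono less_le_trans psubset_card_mono)
      moreover have "card T \<le> card (\<Union>(N2 ` T))" if T: "T \<subseteq> A - S" for T
      proof -
        have finT: "finite T" using T less.prems(1) finite_subset by blast
        have e: "\<Union>(N2 ` T) = \<Union>(N`(T\<union>S)) - U" unfolding N2_def U_def by auto
        have sub: "U \<subseteq> \<Union>(N`(T\<union>S))" unfolding U_def by auto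
        have fin2: "finite (\<Union>(N`(T\<union>S)))" using finT finS less.prems(2) T S by auto
        have "T \<union> S \<subseteq> A" using T S by auto
        then have "card (T \<union> S) \<le> card (\<Union>(N`(T\<union>S)))" by (rule less.prems(3))
        moreover have "card (T \<union> S) = card T + card S"
          using T finT finS by (subst card_Un_disjoint) auto
        moreover have "card (\<Union>(N2 ` T)) = card (\<Union>(N`(T\<union>S))) - card U"
          using e sub fin2 by (simp add: card_Diff_subset finite_subset)
        moreover have "card U = card S" using cS unfolding U_def .
        ultimately show ?thesis by simp
      qed
      ultimately obtain f2 where f2: "inj_on f2 (A - S)" "\<forall>a\<in>A-S. f2 a \<in> N2 a"
        using less.hyps[of "A - S" N2] less.prems(1) less.prems(2) unfolding N2_def by auto
      define f where "f a = (if a \<in> S then f1 a else f2 a)" for a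
      have "inj_on f A"
      proof (rule inj_onI)
        fix x y assume xy: "x \<in> A" "y \<in> A" "f x = f y"
        show "x = y"
        proof (cases "x \<in> S"; cases "y \<in> S")
          assume "x \<in> S" "y \<in> S" then show ?thesis using xy f1 unfolding f_def by (auto dest: inj_onD)
        next
          assume "x \<notin> S" "y \<notin> S" then show ?thesis using xy f2 unfolding f_def by (auto dest: inj_onD)
        next
          assume a: "x \<in> S" "y \<notin> S"
          then have "f x \<in> U" using f1 unfolding f_def U_def by auto
          moreover have "f y \<notin> U" using a xy f2 unfolding f_def N2_def by auto
          ultimately show ?thesis using xy by simp
        next
          assume a: "x \<notin> S" "y \<in> S"
          then have "f y \<in> U" using f1 unfolding f_def U_def by auto
          moreover have "f2 x \<notin> U" using a xy(1) f2(2) unfolding N2_def by blast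
          moreover have "f x = f2 x" using a unfolding f_def by simp
          ultimately show ?thesis using xy by simp
        qed
      qed
      moreover have "\<forall>a\<in>A. f a \<in> N a" using f1 f2 unfolding f_def N2_def by auto
      ultimately show ?thesis by blast
    next
      case False2: False
      obtain a where a: "a \<in> A" using False by auto
      have "card {a} \<le> card (N a)" using less.prems(3)[of "{a}"] a by auto
      then obtain b where b: "b \<in> N a" by fastforce
      define N2 where "N2 x = N x - {b}" for x
      have "card (A - {a}) < card A" using a less.prems(1) by (meson card_Diff1_less)
      moreover have "card T \<le> card (\<Union>(N2 ` T))" if T: "T \<subseteq> A - {a}" for T
      proof (cases "T = {}")
        case True then show ?thesis by simp
      next
        case False
        have "T \<subset> A" using T a by auto
        then have "card T < card (\<Union>(N ` T))" using False2 False by (meson not_le)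
        moreover have "\<Union>(N2 ` T) = \<Union>(N ` T) - {b}" unfolding N2_def by auto
        moreover have "finite (\<Union>(N ` T))" using T less.prems(1,2) finite_subset by blast
        moreover have "card (\<Union>(N ` T)) - 1 \<le> card (\<Union>(N ` T) - {b})"
          by (simp add: card_Diff_singleton_if)
        ultimately show ?thesis by simp
      qed
      ultimately obtain f2 where f2: "inj_on f2 (A - {a})" "\<forall>x\<in>A-{a}. f2 x \<in> N2 x"
        using less.hyps[of "A - {a}" N2] less.prems(1) less.prems(2) unfolding N2_def by auto
      define f where "f = f2(a := b)"
      have "inj_on f A"
      proof -
        have "inj_on f (A - {a})" using f2 unfolding f_def by (simp add: inj_on_def)
        moreover have "f a \<notin> f ` (A - {a})" using f2 unfolding f_def N2_def by auto
        ultimately have "inj_on f (insert a (A - {a}))" by (intro inj_on_insert[THEN iffD2] conjI) auto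
        then show ?thesis using a by (simp add: insert_absorb)
      qed
      moreover have "\<forall>x\<in>A. f x \<in> N x" using f2 b unfolding f_def N2_def by auto
      ultimately show ?thesis by blast
    qed
  qed
qed

lemma hall_defect:
  fixes N :: "'x \<Rightarrow> 'y set"
  assumes "finite A" "\<And>a. a\<in>A \<Longrightarrow> finite (N a)"
    "\<And>S. S \<subseteq> A \<Longrightarrow> card S \<le> card (\<Union>(N ` S)) + d"
  shows "\<exists>A0 f. A0 \<subseteq> A \<and> card A \<le> card A0 + d \<and> inj_on f A0 \<and> (\<forall>a\<in>A0. f a \<in> N a)"
proof -
  define N' :: "'x \<Rightarrow> ('y + nat) set" where "N' a = Inl ` N a \<union> Inr ` {..<d}" for a
  have "card S \<le> card (\<Union>(N' ` S))" if S: "S \<subseteq> A" for S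
  proof (cases "S = {}")
    case True then show ?thesis by simp
  next
    case False
    have finS: "finite S" using S assms(1) finite_subset by blast
    have "\<Union>(N' ` S) = Inl ` \<Union>(N ` S) \<union> Inr ` {..<d}" using False unfolding N'_def by auto
    moreover have "card (Inl ` \<Union>(N ` S) \<union> Inr ` {..<d} :: ('y + nat) set) = card (\<Union>(N ` S)) + d"
    proof -
      have "finite (\<Union>(N ` S))" using finS S assms(2) by blast
      then have "card (Inl ` \<Union>(N ` S) \<union> Inr ` {..<d} :: ('y + nat) set)
          = card (Inl ` \<Union>(N ` S) :: ('y + nat) set) + card (Inr ` {..<d} :: ('y + nat) set)"
        by (intro card_Un_disjoint) auto
      also have "\<dots> = card (\<Union>(N ` S)) + d"
        by (simp add: card_image)
      finally show ?thesis .
    qed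
    ultimately show ?thesis using assms(3)[OF S] by simp
  qed
  then obtain g where g: "inj_on g A" "\<forall>a\<in>A. g a \<in> N' a"
    using hall[of A N'] assms(1,2) unfolding N'_def by auto
  define A0 where "A0 = {a\<in>A. \<exists>y. g a = Inl y}"
  define f where "f a = projl (g a)" for a
  have "A0 \<subseteq> A" unfolding A0_def by auto
  moreover have "card A \<le> card A0 + d"
  proof -
    have that_sub: "g ` (A - A0) \<subseteq> Inr ` {..<d}" using g unfolding A0_def N'_def by auto
    then have "card (g ` (A - A0)) \<le> d"
    proof -
      have "card (g ` (A - A0)) \<le> card (Inr ` {..<d} :: ('y + nat) set)" using that_sub by (intro card_mono) auto
      also have "\<dots> = d" by (simp add: card_image)
      finally show ?thesis .
    qed
    moreover have "card (g ` (A - A0)) = card (A - A0)"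
      using g(1) by (meson Diff_subset card_image inj_on_subset)
    moreover have "card (A - A0) = card A - card A0"
      using assms(1) \<open>A0 \<subseteq> A\<close> by (meson card_Diff_subset finite_subset)
    moreover have "card A0 \<le> card A" using assms(1) \<open>A0 \<subseteq> A\<close> by (simp add: card_mono)
    ultimately show ?thesis by linarith
  qed
  moreover have "inj_on f A0"
  proof (rule inj_onI)
    fix x y assume "x \<in> A0" "y \<in> A0" "f x = f y"
    then have "g x = g y" unfolding A0_def f_def by auto
    then show "x = y" using g(1) \<open>x \<in> A0\<close> \<open>y \<in> A0\<close> unfolding A0_def by (auto dest: inj_onD)
  qed
  moreover have "\<forall>a\<in>A0. f a \<in> N a" using g unfolding A0_def f_def N'_def by auto
  ultimately show ?thesis by blast
qed

lemma edge_two: assumes "card e = 2" obtains x y where "x \<noteq> y" "e = {x, y}"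
  using assms by (meson card_2_iff)

lemma konig:
  assumes sg: "simple_graph V E" and bp: "bipartite V E"
  shows "\<exists>C M. C \<subseteq> V \<and> (\<forall>e\<in>E. e \<inter> C \<noteq> {}) \<and> matching E M \<and> card C \<le> card M"
proof -
  obtain A B where AB: "A \<union> B = V" "A \<inter> B = {}" "\<forall>e\<in>E. e \<inter> A \<noteq> {} \<and> e \<inter> B \<noteq> {}"
    using bp unfolding bipartite_def by blast
  have finV: "finite V" and Ecard: "\<forall>e\<in>E. e \<subseteq> V \<and> card e = 2" using sg unfolding simple_graph_def by auto
  have finA: "finite A" using AB finV by (metis finite_Un)
  define Nb where "Nb a = {b\<in>B. {a,b}\<in>E}" for a
  have finB: "finite B" using AB finV by (metis finite_Un)
  have finNb: "finite (Nb a)" for a unfolding Nb_def by (rule finite_subset[OF _ finB]) auto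
  define D where "D = (\<lambda>S. card S - card (\<Union>(Nb ` S))) ` Pow A"
  have finD: "finite D" unfolding D_def using finA by simp
  have "0 \<in> D" unfolding D_def by (rule image_eqI[of _ _ "{}"]) auto
  define d where "d = Max D"
  have dD: "d \<in> D" unfolding d_def using finD \<open>0 \<in> D\<close> by (metis Max_in empty_iff)
  have dge: "card S \<le> card (\<Union>(Nb ` S)) + d" if "S \<subseteq> A" for S
  proof -
    have "card S - card (\<Union>(Nb ` S)) \<in> D" unfolding D_def using that by auto
    then have "card S - card (\<Union>(Nb ` S)) \<le> d" unfolding d_def using finD by simp
    then show ?thesis by linarith
  qed
  obtain S0 where S0: "S0 \<subseteq> A" "card S0 = card (\<Union>(Nb ` S0)) + d"
  proof (cases "d = 0")
    case True then show ?thesis using that[of "{}"] by simp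
  next
    case False
    then obtain S where "S \<subseteq> A" "d = card S - card (\<Union>(Nb ` S))" using dD unfolding D_def by auto
    then show ?thesis using that[of S] False by simp
  qed
  obtain A0 f where Af: "A0 \<subseteq> A" "card A \<le> card A0 + d" "inj_on f A0" "\<forall>a\<in>A0. f a \<in> Nb a"
    using hall_defect[of A Nb d] finA finNb dge by blast
  define M where "M = (\<lambda>a. {a, f a}) ` A0"
  have fB: "f a \<in> B" "{a, f a} \<in> E" if "a \<in> A0" for a using Af(4) that unfolding Nb_def by auto
  have inj: "inj_on (\<lambda>a. {a, f a}) A0"
  proof (rule inj_onI)
    fix x y assume xy: "x \<in> A0" "y \<in> A0" "{x, f x} = {y, f y}"
    have "x \<in> A" "y \<in> A" using xy Af(1) by auto
    moreover have "f x \<in> B" "f y \<in> B" using xy fB by auto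
    ultimately show "x = y" using xy(3) AB(2) by (metis disjoint_iff doubleton_eq_iff)
  qed
  have cardM: "card M = card A0" unfolding M_def using inj by (simp add: card_image)
  have matchM: "matching E M"
    unfolding matching_def
  proof (intro conjI ballI impI)
    show "M \<subseteq> E" unfolding M_def using fB by auto
  next
    fix e g assume eg: "e \<in> M" "g \<in> M" "e \<noteq> g"
    then obtain x y where xy: "x \<in> A0" "y \<in> A0" "e = {x, f x}" "g = {y, f y}" unfolding M_def by auto
    then have "x \<noteq> y" using eg by auto
    moreover have "x \<in> A" "y \<in> A" using xy Af(1) by auto
    moreover have "f x \<in> B" "f y \<in> B" using xy fB by auto
    moreover have "f x \<noteq> f y" using \<open>x \<noteq> y\<close> Af(3) xy by (meson inj_onD)
    ultimately show "e \<inter> g = {}" using xy AB(2) by auto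
  qed
  define C where "C = (A - S0) \<union> \<Union>(Nb ` S0)"
  have "C \<subseteq> V" unfolding C_def Nb_def using AB by auto
  moreover have "\<forall>e\<in>E. e \<inter> C \<noteq> {}"
  proof
    fix e assume e: "e \<in> E"
    obtain a b where ab: "a \<in> e" "a \<in> A" "b \<in> e" "b \<in> B" using AB(3) e by blast
    obtain x y where "x \<noteq> y" "e = {x, y}" using Ecard e edge_two by metis
    moreover have "a \<noteq> b" using ab AB(2) by auto
    ultimately have "e = {a, b}" using ab by auto
    show "e \<inter> C \<noteq> {}"
    proof (cases "a \<in> S0")
      case True
      then have "b \<in> Nb a" unfolding Nb_def using ab e \<open>e = {a,b}\<close> by auto
      then show ?thesis using True ab unfolding C_def by auto
    next
      case False then show ?thesis using ab unfolding C_def by auto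
    qed
  qed
  moreover have "card C \<le> card M"
  proof -
    have "finite (\<Union>(Nb ` S0))" using finNb S0(1) finA finite_subset by blast
    then have "card C \<le> card (A - S0) + card (\<Union>(Nb ` S0))" unfolding C_def by (simp add: card_Un_le)
    moreover have "card (A - S0) = card A - card S0" using S0(1) finA by (meson card_Diff_subset finite_subset)
    moreover have "card S0 \<le> card A" using S0(1) finA by (simp add: card_mono)
    ultimately show ?thesis using S0(2) Af(2) cardM by linarith
  qed
  ultimately show ?thesis using matchM by blast
qed

lemma edge_pt: assumes "card e = 2" "v \<in> e" shows "\<exists>u. u \<noteq> v \<and> e = {v, u}"
proof -
  obtain x y where "x \<noteq> y" "e = {x, y}" using assms(1) by (meson card_2_iff)
  then show ?thesis using assms(2) by auto
qed

lemma matching_hit_card: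
  assumes "matching E M" "finite X" "\<forall>e\<in>M. e \<inter> X \<noteq> {}"
  shows "card M \<le> card X"
proof -
  define h where "h e = (SOME x. x \<in> e \<inter> X)" for e
  have h: "h e \<in> e \<inter> X" if "e \<in> M" for e
    unfolding h_def using assms(3) that by (metis ex_in_conv someI_ex)
  have "inj_on h M"
  proof (rule inj_onI)
    fix e f assume ef: "e \<in> M" "f \<in> M" "h e = h f"
    then have "h e \<in> e \<inter> f" using h by (metis IntD1 IntI)
    then show "e = f" using assms(1) ef unfolding matching_def by blast
  qed
  moreover have "h ` M \<subseteq> X" using h by auto
  ultimately show ?thesis using assms(2) by (metis card_image card_mono)
qed

theorem mainTheorem7:
  fixes V :: "'a set" and E :: "'a set set"
  assumes "simple_graph V E" and "bipartite V E"
  shows "diss V E = independence_number V E \<longleftrightarrow>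
    \<not> (\<exists>N. induced_matching E N \<and> (\<forall>M. maximum_matching E M \<longrightarrow> M \<inter> N \<noteq> {}))"
proof -
  have finV: "finite V" and Ecard: "\<forall>e\<in>E. e \<subseteq> V \<and> card e = 2"
    using assms(1) unfolding simple_graph_def by auto
  have finE: "finite E" using Ecard finV by (meson Pow_iff finite_Pow_iff finite_subset subsetI)
  have finM: "finite M" if "matching E M" for M
    using that finE unfolding matching_def by (meson finite_subset)
  define ms where "ms = card ` {M. matching E M}"
  have finms: "finite ms" unfolding ms_def
    by (rule finite_subset[of _ "card ` Pow E"]) (auto simp: matching_def finE)
  have "({}::'a set set) \<in> {M. matching E M}" by (simp add: matching_def)
  then have "card ({}::'a set set) \<in> ms" unfolding ms_def by (rule imageI)
  define nu where "nu = Max ms"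
  have mle: "card M \<le> nu" if "matching E M" for M
    unfolding nu_def ms_def using finms that ms_def by simp
  obtain M0 where M0: "matching E M0" "card M0 = nu"
    using Max_in[OF finms] \<open>card ({}::'a set set) \<in> ms\<close> unfolding nu_def ms_def by (metis empty_iff imageE mem_Collect_eq)
  have maxiff: "maximum_matching E M \<longleftrightarrow> matching E M \<and> card M = nu" for M
    unfolding maximum_matching_def using mle M0 by (metis le_antisym)
  have nuV: "nu \<le> card V"
  proof -
    have "\<forall>e\<in>M0. e \<inter> V \<noteq> {}"
    proof
      fix e assume "e \<in> M0"
      then have "e \<in> E" using M0 unfolding matching_def by auto
      then have "e \<subseteq> V" "card e = 2" using Ecard by auto
      then show "e \<inter> V \<noteq> {}" by (metis Int_absorb2 card.empty zero_neq_numeral)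
    qed
    then show ?thesis using matching_hit_card[OF M0(1) finV] M0(2) by simp
  qed
  have indle: "card I + nu \<le> card V" if I: "independent_set V E I" for I
  proof -
    have "\<forall>e\<in>M0. e \<inter> (V - I) \<noteq> {}"
    proof
      fix e assume "e \<in> M0"
      then have eE: "e \<in> E" using M0 unfolding matching_def by auto
      then have "e \<subseteq> V" "card e = 2" using Ecard by auto
      then obtain x y where xy: "x \<noteq> y" "e = {x, y}" by (meson card_2_iff)
      have "\<not> (x \<in> I \<and> y \<in> I)" using I eE xy unfolding independent_set_def by auto
      then show "e \<inter> (V - I) \<noteq> {}" using xy \<open>e \<subseteq> V\<close> by auto
    qed
    then have "card M0 \<le> card (V - I)" using matching_hit_card[OF M0(1)] finV by simp
    moreover have "card (V - I) = card V - card I" using I finV unfolding independent_set_def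
      by (meson card_Diff_subset finite_subset)
    moreover have "card I \<le> card V" using I finV unfolding independent_set_def by (simp add: card_mono)
    ultimately show ?thesis using M0(2) by linarith
  qed
  define isx where "isx = card ` {I. independent_set V E I}"
  have finisx: "finite isx" unfolding isx_def
    by (rule finite_subset[of _ "card ` Pow V"]) (auto simp: independent_set_def finV)
  obtain C M where CM: "C \<subseteq> V" "\<forall>e\<in>E. e \<inter> C \<noteq> {}" "matching E M" "card C \<le> card M"
    using konig[OF assms] by blast
  have indVC: "independent_set V E (V - C)"
    unfolding independent_set_def using CM(2) by auto
  have cVC: "card (V - C) = card V - card C" using CM(1) finV by (meson card_Diff_subset finite_subset)
  have alpha: "independence_number V E = card V - nu"
  proof -
    have "card (V - C) \<in> isx" unfolding isx_def using indVC by auto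
    then have "card (V - C) \<le> Max isx" using finisx by simp
    moreover have "Max isx \<in> isx" using finisx \<open>card (V - C) \<in> isx\<close> by (metis Max_in empty_iff)
    then obtain I where "independent_set V E I" "Max isx = card I" unfolding isx_def by auto
    then have "Max isx + nu \<le> card V" using indle by simp
    moreover have "card M \<le> nu" using mle CM(3) by simp
    ultimately have "Max isx = card V - nu" using cVC CM(4) by linarith
    then show ?thesis unfolding independence_number_def isx_def by simp
  qed
  define ds where "ds = card ` {I. dissociation_set V E I}"
  have finds: "finite ds" unfolding ds_def
    by (rule finite_subset[of _ "card ` Pow V"]) (auto simp: dissociation_set_def finV)
  have diss_eq: "diss V E = Max ds" unfolding diss_def ds_def by simp
  have ind_diss: "dissociation_set V E I" if "independent_set V E I" for I
  proof -
    have emp: "{u\<in>I. {u, v} \<in> E} = {}" if "v \<in> I" for v using \<open>independent_set V E I\<close> that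
      unfolding independent_set_def by auto
    have "I \<subseteq> V" using \<open>independent_set V E I\<close> unfolding independent_set_def by auto
    then show ?thesis by (simp add: dissociation_set_def emp)
  qed
  have VCds: "card (V - C) \<in> ds" unfolding ds_def using ind_diss[OF indVC] by auto
  have alpha_le: "independence_number V E \<le> diss V E"
  proof -
    have "card (V - C) \<in> ds" unfolding ds_def using ind_diss[OF indVC] by auto
    have "card (V - C) \<in> isx" unfolding isx_def using indVC by auto
    then have "Max isx \<in> isx" using finisx by (intro Max_in) auto
    then obtain I where I: "independent_set V E I" "Max isx = card I" unfolding isx_def by auto
    have "card I \<in> ds" unfolding ds_def using ind_diss[OF I(1)] by auto
    then have "card I \<le> Max ds" using finds by simp
    then show ?thesis using I(2) diss_eq unfolding independence_number_def isx_def by simp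
  qed
  show ?thesis
  proof
    assume deq: "diss V E = independence_number V E"
    show "\<not> (\<exists>N. induced_matching E N \<and> (\<forall>M. maximum_matching E M \<longrightarrow> M \<inter> N \<noteq> {}))"
    proof
      assume "\<exists>N. induced_matching E N \<and> (\<forall>M. maximum_matching E M \<longrightarrow> M \<inter> N \<noteq> {})"
      then obtain N where N: "induced_matching E N" "\<forall>M. maximum_matching E M \<longrightarrow> M \<inter> N \<noteq> {}" by blast
      have sg2: "simple_graph V (E - N)" using assms(1) unfolding simple_graph_def by auto
      have bp2: "bipartite V (E - N)"
      proof -
        obtain A B where "A \<union> B = V" "A \<inter> B = {}" "\<forall>e\<in>E. e \<inter> A \<noteq> {} \<and> e \<inter> B \<noteq> {}"
          using assms(2) unfolding bipartite_def by blast
        then show ?thesis unfolding bipartite_def by (intro exI[of _ A] exI[of _ B]) auto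
      qed
      obtain C' M' where CM': "C' \<subseteq> V" "\<forall>e\<in>E - N. e \<inter> C' \<noteq> {}" "matching (E - N) M'" "card C' \<le> card M'"
        using konig[OF sg2 bp2] by blast
      have mM': "matching E M'" using CM'(3) unfolding matching_def by auto
      have "M' \<inter> N = {}" using CM'(3) unfolding matching_def by auto
      then have "\<not> maximum_matching E M'" using N(2) by auto
      then have "card M' < nu" using maxiff mM' mle[OF mM'] by auto
      then have cC': "card C' < nu" using CM'(4) by linarith
      define D where "D = V - C'"
      have NE: "matching E N" using N(1) unfolding induced_matching_def by auto
      have "dissociation_set V E D"
        unfolding dissociation_set_def
      proof (intro conjI ballI)
        show "D \<subseteq> V" unfolding D_def by auto
      next
        fix v assume v: "v \<in> D"
        have fin: "finite {u\<in>D. {u, v} \<in> E}" using finV unfolding D_def by auto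
        have inN: "{u, v} \<in> N" if "u \<in> D" "{u, v} \<in> E" for u
        proof (rule ccontr)
          assume "{u, v} \<notin> N"
          then have "{u, v} \<inter> C' \<noteq> {}" using CM'(2) that(2) by blast
          then show False using that(1) v unfolding D_def by auto
        qed
        have "\<forall>x\<in>{u\<in>D. {u, v} \<in> E}. \<forall>y\<in>{u\<in>D. {u, v} \<in> E}. x = y"
        proof (intro ballI)
          fix x y assume x: "x \<in> {u\<in>D. {u, v} \<in> E}" and y: "y \<in> {u\<in>D. {u, v} \<in> E}"
          have xN: "{x, v} \<in> N" and yN: "{y, v} \<in> N" using x y inN by auto
          have disj: "\<forall>e\<in>N. \<forall>f\<in>N. e \<noteq> f \<longrightarrow> e \<inter> f = {}" using NE unfolding matching_def by blast
          have "v \<in> {x, v} \<inter> {y, v}" by simp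
          then have "{x, v} = {y, v}"
          proof -
            assume vv: "v \<in> {x, v} \<inter> {y, v}"
            show ?thesis
            proof (rule ccontr)
              assume "{x, v} \<noteq> {y, v}"
              then have "{x, v} \<inter> {y, v} = {}" using disj xN yN by simp
              then show False using vv by simp
            qed
          qed
          moreover have "card {x, v} = 2" using x Ecard by auto
          then have "x \<noteq> v" by (cases "x = v") auto
          ultimately show "x = y" by (metis doubleton_eq_iff)
        qed
        then show "card {u\<in>D. {u, v} \<in> E} \<le> 1" using fin by (simp add: card_le_Suc0_iff_eq)
      qed
      then have "card D \<in> ds" unfolding ds_def by auto
      then have "card D \<le> diss V E" using finds diss_eq by simp
      moreover have "card D = card V - card C'" unfolding D_def using CM'(1) finV
        by (meson card_Diff_subset finite_subset)
      ultimately show False using deq alpha cC' nuV by linarith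
    qed
  next
    assume noN: "\<not> (\<exists>N. induced_matching E N \<and> (\<forall>M. maximum_matching E M \<longrightarrow> M \<inter> N \<noteq> {}))"
    show "diss V E = independence_number V E"
    proof (rule ccontr)
      assume "diss V E \<noteq> independence_number V E"
      then have lt: "independence_number V E < diss V E" using alpha_le by linarith
      have "Max ds \<in> ds" using finds VCds by (intro Max_in) auto
      then have "\<exists>D. dissociation_set V E D \<and> card D = diss V E"
        using diss_eq unfolding ds_def by auto
      then obtain D where D: "dissociation_set V E D" "card D = diss V E" by blast
      define N where "N = {e\<in>E. e \<subseteq> D}"
      have matchN: "matching E N"
        unfolding matching_def
      proof (intro conjI ballI impI)
        show "N \<subseteq> E" unfolding N_def by auto
      next
        fix e f assume ef: "e \<in> N" "f \<in> N" "e \<noteq> f"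
        show "e \<inter> f = {}"
        proof (rule ccontr)
          assume "e \<inter> f \<noteq> {}"
          then obtain v where v: "v \<in> e" "v \<in> f" by auto
          have eE: "e \<in> E" "e \<subseteq> D" and fE: "f \<in> E" "f \<subseteq> D" using ef unfolding N_def by auto
          have c2: "card e = 2" "card f = 2" using Ecard eE(1) fE(1) by auto
          obtain u where u: "u \<noteq> v" "e = {v, u}" using edge_pt[OF c2(1) v(1)] by blast
          obtain w where w: "w \<noteq> v" "f = {v, w}" using edge_pt[OF c2(2) v(2)] by blast
          have "u \<noteq> w" using u w ef by auto
          have vD: "v \<in> D" using v eE by auto
          have sub: "{u, w} \<subseteq> {x\<in>D. {x, v} \<in> E}" using u w eE fE by (auto simp: insert_commute)
          have "finite {x\<in>D. {x, v} \<in> E}" using D(1) finV unfolding dissociation_set_def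
            by (metis (no_types, lifting) finite_subset mem_Collect_eq subset_iff)
          then have "card {u, w} \<le> card {x\<in>D. {x, v} \<in> E}" using sub by (rule card_mono)
          moreover have "card {x\<in>D. {x, v} \<in> E} \<le> 1" using D(1) vD unfolding dissociation_set_def by auto
          ultimately show False using \<open>u \<noteq> w\<close> by simp
        qed
      qed
      have "induced_matching E N"
        unfolding induced_matching_def using matchN unfolding N_def by auto
      moreover have "M \<inter> N \<noteq> {}" if M: "maximum_matching E M" for M
      proof
        assume MN: "M \<inter> N = {}"
        have mM: "matching E M" "card M = nu" using M maxiff by auto
        have "\<forall>e\<in>M. e \<inter> (V - D) \<noteq> {}"
        proof
          fix e assume e: "e \<in> M"
          then have eE: "e \<in> E" using mM unfolding matching_def by auto
          then have "\<not> e \<subseteq> D" using MN e unfolding N_def by auto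
          moreover have "e \<subseteq> V" using Ecard eE by auto
          ultimately show "e \<inter> (V - D) \<noteq> {}" by auto
        qed
        then have "card M \<le> card (V - D)" using matching_hit_card[OF mM(1)] finV by simp
        moreover have "card (V - D) = card V - card D" using D(1) finV unfolding dissociation_set_def
          by (meson card_Diff_subset finite_subset)
        moreover have "card D \<le> card V" using D(1) finV unfolding dissociation_set_def by (simp add: card_mono)
        ultimately show False using mM(2) D(2) lt alpha nuV by linarith
      qed
      ultimately show False using noN by blast
    qed
  qed
qed

end
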